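(* In the oligopoly game below, there exists an equilibrium $(\mathbf A^{\rm d},\mathbf q^{\rm d})$ with $$\mathbf A^{\rm d}\mathbf q^{\rm d}=\boldsymbol\beta,\qquad \mathbf q^{\rm d}=\frac{\boldsymbol\gamma}{2+\alpha}$$ if and only if $r(\boldsymbol\gamma)\le 2+\alpha\le R(\boldsymbol\gamma)$.
   Context: Model: integers $n\ge2$, $m\ge2$; $\alpha>0$, $\boldsymbol\beta\in\mathbb R^m$ with $\|\boldsymbol\beta\|_2=1$, $\boldsymbol\gamma\in\mathbb R^n$ with all $\gamma_i>0$. $\mathcal A$ is the set of real $m\times n$ matrices $\mathbf A=[\mathbf a_1,\dots,\mathbf a_n]$ with all $\|\mathbf a_i\|_2=1$. Firm $i$ chooses a unit vector $\mathbf a_i\in\mathbb R^m$ and $q_i\ge0$, earning $\Pi_i=\alpha q_i\mathbf a_i^\top(\boldsymbol\beta-\sum_{j\ne i}q_j\mathbf a_j)-(1+\alpha)q_i^2+\gamma_iq_i$. An equilibrium is $(\mathbf A^*,\mathbf q^* )$ in which each $(\mathbf a_i^*,q_i^* )$ maximizes $\Pi_i$ given the others' choices. $R(\mathbf v)=\|\mathbf v\|_1$, $r(\mathbf v)=2\|\mathbf v\|_\infty-\|\mathbf v\|_1$. *)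

theory Defs
  imports "HOL-Analysis.Analysis"
begin

text \<open>Firms are indexed by the finite type 'n (n = CARD('n)), the product space is
  real^'m (m = CARD('m)). A matrix A :: real^'n^'m has columns a_i = column i A.\<close>

definition profit :: "real \<Rightarrow> real^'m \<Rightarrow> real^'n \<Rightarrow> real^'n^'m \<Rightarrow> real^'n \<Rightarrow> 'n \<Rightarrow> real^'m \<Rightarrow> real \<Rightarrow> real" where
  "profit \<alpha> \<beta> \<gamma> A q i a x =
     \<alpha> * x * (a \<bullet> (\<beta> - (\<Sum>j\<in>UNIV - {i}. (q $ j) *\<^sub>R column j A)))
     - (1 + \<alpha>) * x\<^sup>2 + \<gamma> $ i * x"

definition unit_cols :: "real^'n^'m \<Rightarrow> bool" where
  "unit_cols A \<longleftrightarrow> (\<forall>i. norm (column i A) = 1)"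

definition is_equilibrium :: "real \<Rightarrow> real^'m \<Rightarrow> real^'n \<Rightarrow> real^'n^'m \<Rightarrow> real^'n \<Rightarrow> bool" where
  "is_equilibrium \<alpha> \<beta> \<gamma> A q \<longleftrightarrow>
     unit_cols A \<and> (\<forall>i. q $ i \<ge> 0) \<and>
     (\<forall>i a x. norm a = 1 \<longrightarrow> x \<ge> 0 \<longrightarrow>
        profit \<alpha> \<beta> \<gamma> A q i a x \<le> profit \<alpha> \<beta> \<gamma> A q i (column i A) (q $ i))"

definition R_norm :: "real^'n \<Rightarrow> real" where
  "R_norm v = (\<Sum>i\<in>UNIV. \<bar>v $ i\<bar>)"

definition r_fun :: "real^'n \<Rightarrow> real" where
  "r_fun v = 2 * Max (range (\<lambda>i. \<bar>v $ i\<bar>)) - R_norm v"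

end

theory Submission imports Defs begin

lemma two_vec:
  fixes v :: complex and p rho r :: real
  assumes "norm v = rho" "p > 0" "\<bar>rho - p\<bar> \<le> r" "r \<le> rho + p"
  shows "\<exists>w. norm w = 1 \<and> norm (v + of_real p * w) = r"
proof (cases "rho = 0")
  case True
  then have "v = 0" "r = p" using assms by auto
  then show ?thesis using assms(2) by (intro exI[of _ 1]) auto
next
  case False
  then have rp: "rho > 0" using assms(1) norm_ge_zero by (metis less_eq_real_def)
  have r0: "r \<ge> 0" using assms by linarith
  define c where "c = (r^2 - rho^2 - p^2) / (2*rho*p)"
  have "(rho - p)^2 \<le> r^2" using assms(3) r0
    by (metis abs_le_square_iff abs_of_nonneg)
  then have c1: "c \<ge> -1" unfolding c_def using rp assms(2)
    by (simp add: field_simps power2_eq_square) 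
  have "r^2 \<le> (rho + p)^2" using assms(4) r0 by (simp add: power_mono)
  then have c2: "c \<le> 1" unfolding c_def using rp assms(2)
    by (simp add: field_simps power2_eq_square)
  define s where "s = sqrt (1 - c^2)"
  have "c^2 \<le> 1" using c1 c2 by (simp add: abs_square_le_1 abs_le_iff)
  then have cs: "c^2 + s^2 = 1" unfolding s_def by simp
  define w where "w = (v / of_real rho) * Complex c s"
  have nC: "norm (Complex c s) = 1" using cs by (simp add: norm_complex_def)
  have nw: "norm w = 1" unfolding w_def using assms(1) rp nC by (simp add: norm_mult norm_divide)
  have eq: "v + of_real p * w = (v / of_real rho) * Complex (rho + p * c) (p * s)"
    unfolding w_def using rp by (simp add: field_simps complex_eq_iff)
  have "(rho + p * c)^2 + (p * s)^2 = rho^2 + 2*rho*p * c + p^2 * (c^2+s^2)"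
    by (simp add: power2_eq_square algebra_simps)
  also have "\<dots> = rho^2 + 2*rho*p*c + p^2" using cs by simp
  also have "\<dots> = r^2" using rp assms(2) unfolding c_def by (simp add: field_simps)
  finally have "norm (Complex (rho + p * c) (p * s)) = r" using r0 by (simp add: norm_complex_def)
  then have "norm (v + of_real p * w) = r" unfolding eq using assms(1) rp by (simp add: norm_mult norm_divide)
  then show ?thesis using nw by blast
qed

lemma polygon:
  fixes q :: "'a \<Rightarrow> real"
  assumes "finite I" "I \<noteq> {}"
  shows "\<forall>i\<in>I. q i > 0 \<Longrightarrow> 0 \<le> r \<Longrightarrow> r \<le> sum q I \<Longrightarrow> (\<forall>k\<in>I. 2 * q k - sum q I \<le> r) \<Longrightarrow>
    \<exists>z::'a\<Rightarrow>complex. (\<forall>i. norm (z i) = 1) \<and> norm (\<Sum>i\<in>I. of_real (q i) * z i) = r"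
  using assms(1,2)
proof (induction I arbitrary: r rule: finite_ne_induct)
  case (singleton x)
  then have "r = q x" by auto
  then show ?case using singleton.prems(1) by (intro exI[of _ "\<lambda>_. 1"]) auto
next
  case (insert x F)
  note pos = insert.prems(1) and r0 = insert.prems(2) and rS = insert.prems(3) and rk = insert.prems(4)
  let ?S = "sum q F"
  let ?p = "q x"
  have p0: "?p > 0" using pos by simp
  have posF: "\<forall>i\<in>F. q i > 0" using pos by simp
  have Fle: "q k \<le> ?S" if k: "k \<in> F" for k
    by (rule member_le_sum[OF k]) (use posF less_imp_le in blast, rule insert.hyps(1))
  have S0: "?S \<ge> 0" using posF by (simp add: sum_nonneg less_imp_le)
  have Sx: "sum q (insert x F) = ?p + ?S" using insert.hyps by simp
  define rho where "rho = min ?S (r + ?p)"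
  have r1: "?p - ?S \<le> r" using rk Sx by auto
  have r2: "r \<le> ?S + ?p" using rS Sx by linarith
  have H3: "\<forall>k\<in>F. 2 * q k - ?S \<le> rho"
  proof
    fix k assume k: "k \<in> F"
    have "2 * q k - (?p + ?S) \<le> r" using rk k Sx by auto
    then show "2 * q k - ?S \<le> rho" unfolding rho_def using Fle[OF k] by linarith
  qed
  have H1: "0 \<le> rho" unfolding rho_def using S0 r0 p0 by linarith
  have H2: "rho \<le> ?S" unfolding rho_def by linarith
  obtain z :: "'a \<Rightarrow> complex" where z: "\<forall>i. norm (z i) = 1" "norm (\<Sum>i\<in>F. of_real (q i) * z i) = rho"
    using insert.IH[OF posF H1 H2 H3] by blast
  have "\<bar>rho - ?p\<bar> \<le> r" "r \<le> rho + ?p" unfolding rho_def min_def using r1 r2 r0 p0 by auto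
  then obtain w where w: "norm w = 1" "norm ((\<Sum>i\<in>F. of_real (q i) * z i) + of_real ?p * w) = r"
    using two_vec[OF z(2) p0] by blast
  define z' where "z' = z(x := w)"
  have "(\<Sum>i\<in>F. of_real (q i) * z' i) = (\<Sum>i\<in>F. of_real (q i) * z i)"
    using insert.hyps(3) unfolding z'_def by (intro sum.cong) auto
  then have "(\<Sum>i\<in>insert x F. of_real (q i) * z' i) = of_real ?p * w + (\<Sum>i\<in>F. of_real (q i) * z i)"
    using insert.hyps(1,3) unfolding z'_def by simp
  moreover have "\<forall>i. norm (z' i) = 1" using w z unfolding z'_def by simp
  ultimately show ?case using w by (intro exI[of _ z']) (simp add: add.commute)
qed

lemma sum_cols: "(A::real^'n^'m) *v x = (\<Sum>i\<in>UNIV. x$i *\<^sub>R column i A)"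
  by (simp add: matrix_mult_sum scalar_mult_eq_scaleR)

lemma equil:
  fixes A :: "real^'n^'m" and \<gamma> :: "real^'n"
  assumes uc: "unit_cols A" and al: "\<alpha> > 0" and gp: "\<forall>i. \<gamma> $ i > 0"
    and Aq: "A *v q = \<beta>" and qd: "q = (1 / (2 + \<alpha>)) *\<^sub>R \<gamma>"
  shows "is_equilibrium \<alpha> \<beta> \<gamma> A q"
proof -
  have qi: "\<gamma>$i = (2+\<alpha>) * q$i" for i using qd al by simp
  have q0: "q$i \<ge> 0" for i using qd gp[rule_format, of i] al by simp
  have res: "\<beta> - (\<Sum>j\<in>UNIV-{i}. q$j *\<^sub>R column j A) = q$i *\<^sub>R column i A" for i
    using Aq unfolding sum_cols by (simp add: sum.remove[of UNIV i] algebra_simps)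
  show ?thesis unfolding is_equilibrium_def
  proof (intro conjI allI impI)
    show "unit_cols A" by (rule uc)
    show "q$i \<ge> 0" for i by (rule q0)
    fix i and a :: "real^'m" and x :: real
    assume na: "norm a = 1" and x0: "0 \<le> x"
    define c where "c = column i A"
    have nc: "norm c = 1" using uc unfolding unit_cols_def c_def by simp
    have cc: "c \<bullet> c = 1" using nc by (simp add: dot_square_norm)
    have ac: "a \<bullet> c \<le> 1" using norm_cauchy_schwarz[of a c] na nc by simp
    have P1: "profit \<alpha> \<beta> \<gamma> A q i a x = \<alpha> * x * (q$i * (a \<bullet> c)) - (1+\<alpha>) * x^2 + \<gamma>$i * x"
      unfolding profit_def res c_def by simp
    have P2: "profit \<alpha> \<beta> \<gamma> A q i (column i A) (q$i) = \<alpha> * q$i * (q$i) - (1+\<alpha>) * (q$i)^2 + \<gamma>$i * q$i"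
      unfolding profit_def res using cc unfolding c_def by simp
    have m: "\<alpha> * x * (q$i * (a \<bullet> c)) \<le> \<alpha> * x * (q$i)"
    proof -
      have "q$i * (a \<bullet> c) \<le> q$i" using ac q0[of i] by (simp add: mult_left_le)
      then show ?thesis using al x0 by (simp add: mult_left_mono)
    qed
    have "0 \<le> (1+\<alpha>) * (x - q$i)^2" using al by simp
    then show "profit \<alpha> \<beta> \<gamma> A q i a x \<le> profit \<alpha> \<beta> \<gamma> A q i (column i A) (q$i)"
      unfolding P1 P2 qi using m by (simp add: power2_eq_square algebra_simps)
  qed
qed

lemma orth_unit:
  fixes \<beta> :: "real^'m"
  assumes "CARD('m) \<ge> 2"
  shows "\<exists>e. norm e = 1 \<and> \<beta> \<bullet> e = 0"
proof -
  have "span {\<beta>} \<noteq> UNIV"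
  proof
    assume "span {\<beta>} = UNIV"
    then have "dim (span {\<beta>}) = dim (UNIV :: (real^'m) set)" by simp
    then have "dim {\<beta>} = CARD('m)" by simp
    moreover have "dim {\<beta>} \<le> 1" by simp
    ultimately show False using assms by simp
  qed
  then obtain a :: "real^'m" where a: "a \<noteq> 0" "\<forall>x\<in>span {\<beta>}. a \<bullet> x = 0"
    using span_not_UNIV_orthogonal by blast
  have "a \<bullet> \<beta> = 0" using a(2) span_base[of \<beta> "{\<beta>}"] by simp
  then show ?thesis using a(1)
    by (intro exI[of _ "a /\<^sub>R norm a"]) (simp add: inner_commute)
qed

theorem proposition3:
  fixes \<alpha> :: real and \<beta> :: "real^'m" and \<gamma> :: "real^'n"
  assumes "CARD('n) \<ge> 2" and "CARD('m) \<ge> 2"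
    and "\<alpha> > 0" and "norm \<beta> = 1" and "\<forall>i. \<gamma> $ i > 0"
  shows "(\<exists>A :: real^'n^'m. is_equilibrium \<alpha> \<beta> \<gamma> A ((1 / (2 + \<alpha>)) *\<^sub>R \<gamma>)
             \<and> A *v ((1 / (2 + \<alpha>)) *\<^sub>R \<gamma>) = \<beta>)
         \<longleftrightarrow> r_fun \<gamma> \<le> 2 + \<alpha> \<and> 2 + \<alpha> \<le> R_norm \<gamma>"
proof -
  define q where "q = (1 / (2 + \<alpha>)) *\<^sub>R \<gamma>"
  have al: "2 + \<alpha> > 0" using assms(3) by simp
  have qi: "\<gamma>$i = (2+\<alpha>) * q$i" for i using al unfolding q_def by simp
  have qp: "q$i > 0" for i using assms(5) al unfolding q_def by simp
  have Rn: "R_norm \<gamma> = (2+\<alpha>) * (\<Sum>i\<in>UNIV. q$i)"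
    unfolding R_norm_def using assms(5) qi by (simp add: sum_distrib_left less_imp_le)
  have fin: "finite (range (\<lambda>i. \<bar>\<gamma> $ i\<bar>))" by simp
  obtain k where k: "Max (range (\<lambda>i. \<bar>\<gamma> $ i\<bar>)) = \<bar>\<gamma> $ k\<bar>"
    using Max_in[OF fin] by (metis (no_types, lifting) UNIV_not_empty empty_is_image imageE)
  have rf: "r_fun \<gamma> = (2+\<alpha>) * (2 * q$k - (\<Sum>i\<in>UNIV. q$i))"
  proof -
    have "\<bar>\<gamma> $ k\<bar> = \<gamma> $ k" using assms(5) by (simp add: less_imp_le)
    then show ?thesis unfolding r_fun_def k Rn by (simp add: qi[of k] algebra_simps)
  qed
  have kmax: "q$j \<le> q$k" for j
  proof -
    have "\<bar>\<gamma> $ j\<bar> \<le> \<bar>\<gamma> $ k\<bar>" using Max_ge[OF fin, of "\<bar>\<gamma> $ j\<bar>"] k by auto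
    then show ?thesis using assms(5) qi al by (simp add: less_imp_le)
  qed
  have sr: "(\<Sum>j\<in>UNIV-{k}. q$j) = (\<Sum>i\<in>UNIV. q$i) - q$k"
    by (simp add: sum.remove[of UNIV k])
  show ?thesis unfolding q_def[symmetric]
  proof
    assume "\<exists>A :: real^'n^'m. is_equilibrium \<alpha> \<beta> \<gamma> A q \<and> A *v q = \<beta>"
    then obtain A :: "real^'n^'m" where eqA: "is_equilibrium \<alpha> \<beta> \<gamma> A q" and Aq: "A *v q = \<beta>" by blast
    have nc: "norm (column i A) = 1" for i using eqA unfolding is_equilibrium_def unit_cols_def by simp
    have bs: "\<beta> = (\<Sum>i\<in>UNIV. q$i *\<^sub>R column i A)" using Aq sum_cols by metis
    have "1 \<le> (\<Sum>i\<in>UNIV. norm (q$i *\<^sub>R column i A))"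
      using norm_sum[of "\<lambda>i. q$i *\<^sub>R column i A" UNIV] bs assms(4) by simp
    also have "\<dots> = (\<Sum>i\<in>UNIV. q$i)" using nc qp by (simp add: less_imp_le)
    finally have S1: "1 \<le> (\<Sum>i\<in>UNIV. q$i)" .
    have "q$k *\<^sub>R column k A = \<beta> - (\<Sum>j\<in>UNIV-{k}. q$j *\<^sub>R column j A)"
      using bs by (simp add: sum.remove[of UNIV k] algebra_simps)
    then have "q$k = norm (\<beta> - (\<Sum>j\<in>UNIV-{k}. q$j *\<^sub>R column j A))"
      using nc[of k] qp[of k] by (metis abs_of_pos mult.right_neutral norm_scaleR)
    also have "\<dots> \<le> norm \<beta> + norm (\<Sum>j\<in>UNIV-{k}. q$j *\<^sub>R column j A)"
      by (rule norm_triangle_ineq4)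
    also have "\<dots> \<le> 1 + (\<Sum>j\<in>UNIV-{k}. norm (q$j *\<^sub>R column j A))"
      using assms(4) norm_sum[of "\<lambda>j. q$j *\<^sub>R column j A" "UNIV-{k}"] by simp
    also have "\<dots> = 1 + (\<Sum>j\<in>UNIV-{k}. q$j)" using nc qp by (simp add: less_imp_le)
    finally have "2 * q$k - (\<Sum>i\<in>UNIV. q$i) \<le> 1" using sr by simp
    then have "r_fun \<gamma> \<le> 2 + \<alpha>" unfolding rf using al
      by (metis mult_le_cancel_left_pos mult.right_neutral)
    moreover have "2 + \<alpha> \<le> R_norm \<gamma>" unfolding Rn using S1 al by simp
    ultimately show "r_fun \<gamma> \<le> 2 + \<alpha> \<and> 2 + \<alpha> \<le> R_norm \<gamma>" by simp
  next
    assume H: "r_fun \<gamma> \<le> 2 + \<alpha> \<and> 2 + \<alpha> \<le> R_norm \<gamma>"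
    have S1: "1 \<le> (\<Sum>i\<in>UNIV. q$i)" using H al unfolding Rn by simp
    have K: "2 * q$k - (\<Sum>i\<in>UNIV. q$i) \<le> 1" using H al unfolding rf
      by (metis mult_le_cancel_left_pos mult.right_neutral)
    have allk: "\<forall>j\<in>UNIV. 2 * q$j - (\<Sum>i\<in>UNIV. q$i) \<le> 1" using K kmax
      by (smt (verit))
    obtain z :: "'n \<Rightarrow> complex" where z: "\<forall>i. norm (z i) = 1"
        "norm (\<Sum>i\<in>UNIV. of_real (q$i) * z i) = 1"
      using polygon[where I=UNIV and r=1 and q="\<lambda>i. q$i"] S1 allk qp by auto
    define u where "u = (\<Sum>i\<in>UNIV. of_real (q$i) * z i)"
    define z' where "z' i = z i * cnj u" for i
    have nz': "norm (z' i) = 1" for i using z(1) z(2)[folded u_def] unfolding z'_def by (simp add: norm_mult)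
    have sz': "(\<Sum>i\<in>UNIV. of_real (q$i) * z' i) = 1"
    proof -
      have "(\<Sum>i\<in>UNIV. of_real (q$i) * z' i) = u * cnj u"
        unfolding z'_def u_def by (simp add: sum_distrib_right mult.assoc)
      also have "\<dots> = of_real ((norm u)^2)" by (simp add: complex_norm_square[symmetric])
      also have "\<dots> = 1" using z(2) u_def by simp
      finally show ?thesis .
    qed
    obtain e :: "real^'m" where e: "norm e = 1" "\<beta> \<bullet> e = 0" using orth_unit assms(2) by blast
    define a where "a i = Re (z' i) *\<^sub>R \<beta> + Im (z' i) *\<^sub>R e" for i
    define A :: "real^'n^'m" where "A = (\<chi> r. \<chi> i. a i $ r)"
    have colA: "column i A = a i" for i unfolding A_def column_def by (simp add: vec_eq_iff)
    have na: "norm (a i) = 1" for i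
    proof -
      have "a i \<bullet> a i = (Re (z' i))^2 * (\<beta> \<bullet> \<beta>) + (Im (z' i))^2 * (e \<bullet> e)
          + 2 * Re (z' i) * Im (z' i) * (\<beta> \<bullet> e)"
        unfolding a_def by (simp add: inner_add_left inner_add_right inner_commute power2_eq_square algebra_simps)
      also have "\<dots> = (Re (z' i))^2 + (Im (z' i))^2" using e assms(4) by (simp add: dot_square_norm)
      also have "\<dots> = 1" using nz'[of i] by (simp add: cmod_def)
      finally show ?thesis by (simp add: norm_eq_sqrt_inner)
    qed
    have uc: "unit_cols A" unfolding unit_cols_def colA using na by simp
    have "A *v q = (\<Sum>i\<in>UNIV. q$i *\<^sub>R a i)" unfolding sum_cols colA ..
    also have "\<dots> = (\<Sum>i\<in>UNIV. q$i * Re (z' i)) *\<^sub>R \<beta> + (\<Sum>i\<in>UNIV. q$i * Im (z' i)) *\<^sub>R e"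
      unfolding a_def by (simp add: scaleR_add_right sum.distrib scaleR_sum_left)
    also have "(\<Sum>i\<in>UNIV. q$i * Re (z' i)) = Re (\<Sum>i\<in>UNIV. of_real (q$i) * z' i)"
      by (simp add: Re_sum)
    also have "(\<Sum>i\<in>UNIV. q$i * Im (z' i)) = Im (\<Sum>i\<in>UNIV. of_real (q$i) * z' i)"
      by (simp add: Im_sum)
    finally have Aq: "A *v q = \<beta>" unfolding sz' by simp
    have "is_equilibrium \<alpha> \<beta> \<gamma> A q" using equil[OF uc assms(3) assms(5) Aq q_def] .
    then show "\<exists>A :: real^'n^'m. is_equilibrium \<alpha> \<beta> \<gamma> A q \<and> A *v q = \<beta>" using Aq by blast
  qed
qed

end
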